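(* Let $G_r$ be a cactus request graph, i.e., a directed graph such that any two distinct cycles of its underlying undirected graph share at most a single node. Then $\mathrm{ew}_{\mathcal X}(G^{\mathcal X}_r)\le 2$ holds for every extraction order $G^{\mathcal X}_r$ of $G_r$.
   Context: An extraction order of a directed graph $G_r=(V_r,E_r)$ is a rooted directed acyclic graph $G^{\mathcal X}_r=(V_r,E^{\mathcal X}_r,s_r)$ in which every node is reachable from $s_r$ and $E^{\mathcal X}_r$ is obtained from $E_r$ by reversing some (possibly no) edges. A confluence from $i$ to $j$ is a pair of directed paths in $E^{\mathcal X}_r$ from $i$ to $j$ sharing no node other than $i,j$. For $e\in E^{\mathcal X}_r$, its label set $\mathcal L_e$ is the set of nodes $j$ such that $e$ lies on some confluence with target $j$. The outgoing edges of each node are partitioned into bags: classes of the equivalence relation generated by $e\sim e'$ iff $\mathcal L_e\cap\mathcal L_{e'}\neq\emptyset$; a bag's label set is $\mathcal L_B=\bigcup_{e\in B}\mathcal L_e$. The extraction width is $\mathrm{ew}_{\mathcal X}(G^{\mathcal X}_r)=1+\max|\mathcal L_B|$ over all bags of all nodes. *)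

theory Defs
  imports "Graph_Theory.Graph_Theory"
begin

definition ucycle :: "('a,'b) pre_digraph \<Rightarrow> 'a list \<Rightarrow> 'b list \<Rightarrow> bool" where
  "ucycle G vs es \<equiv> es \<noteq> [] \<and> length vs = length es \<and> distinct vs \<and> distinct es
     \<and> set es \<subseteq> arcs G \<and> set vs \<subseteq> verts G
     \<and> (\<forall>i < length es. {tail G (es ! i), head G (es ! i)}
                          = {vs ! i, vs ! ((i + 1) mod length es)})"

definition cactus :: "('a,'b) pre_digraph \<Rightarrow> bool" where
  "cactus G \<equiv> \<forall>vs es vs' es'. ucycle G vs es \<and> ucycle G vs' es' \<and> set es \<noteq> set es'
       \<longrightarrow> card (set vs \<inter> set vs') \<le> 1"

definition extraction_order :: "('a,'b) pre_digraph \<Rightarrow> ('a,'b) pre_digraph \<Rightarrow> 'a \<Rightarrow> bool" where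
  "extraction_order G H s \<equiv> verts H = verts G \<and> arcs H = arcs G
     \<and> (\<forall>e \<in> arcs G. (tail H e = tail G e \<and> head H e = head G e)
                    \<or> (tail H e = head G e \<and> head H e = tail G e))
     \<and> s \<in> verts H \<and> (\<forall>v \<in> verts H. s \<rightarrow>\<^sup>*\<^bsub>H\<^esub> v)
     \<and> \<not> (\<exists>p. pre_digraph.cycle H p)"

definition confluence :: "('a,'b) pre_digraph \<Rightarrow> 'a \<Rightarrow> 'a \<Rightarrow> 'b list \<Rightarrow> 'b list \<Rightarrow> bool" where
  "confluence H i j p q \<equiv> pre_digraph.apath H i p j \<and> pre_digraph.apath H i q j \<and> p \<noteq> q
     \<and> set (pre_digraph.awalk_verts H i p) \<inter> set (pre_digraph.awalk_verts H i q) \<subseteq> {i, j}"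

definition label_set :: "('a,'b) pre_digraph \<Rightarrow> 'b \<Rightarrow> 'a set" where
  "label_set H e = {j. \<exists>i p q. confluence H i j p q \<and> e \<in> set p \<union> set q}"

definition bag_rel :: "('a,'b) pre_digraph \<Rightarrow> 'a \<Rightarrow> ('b \<times> 'b) set" where
  "bag_rel H u = {(e, e'). e \<in> out_arcs H u \<and> e' \<in> out_arcs H u
                          \<and> label_set H e \<inter> label_set H e' \<noteq> {}}"

definition bags :: "('a,'b) pre_digraph \<Rightarrow> 'a \<Rightarrow> 'b set set" where
  "bags H u = out_arcs H u // ((bag_rel H u)\<^sup>*)"

definition bag_label :: "('a,'b) pre_digraph \<Rightarrow> 'b set \<Rightarrow> 'a set" where
  "bag_label H B = \<Union> (label_set H ` B)"

text \<open>Extraction width; the max over an empty family of bags is taken as 0.\<close>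
definition extraction_width :: "('a,'b) pre_digraph \<Rightarrow> nat" where
  "extraction_width H = 1 + Max (insert 0
      {card (bag_label H B) | B u. u \<in> verts H \<and> B \<in> bags H u})"

end

theory Submission
  imports Defs
begin

lemma cas_verts: "pre_digraph.cas H u p v \<Longrightarrow> pre_digraph.awalk_verts H u p = u # map (head H) p"
  by (induct p arbitrary: u) (auto simp: pre_digraph.cas.simps pre_digraph.awalk_verts.simps)

lemma cas_nth: "pre_digraph.cas H u p v \<Longrightarrow> k < length p \<Longrightarrow> tail H (p!k) = (u # map (head H) p) ! k"
  by (induct p arbitrary: u k) (auto simp: pre_digraph.cas.simps nth_Cons split: nat.splits)

lemma cas_last: "pre_digraph.cas H u p v \<Longrightarrow> last (u # map (head H) p) = v"
  by (induct p arbitrary: u) (auto simp: pre_digraph.cas.simps)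

lemma cas_tails: "pre_digraph.cas H u p v \<Longrightarrow> map (tail H) p = butlast (u # map (head H) p)"
  by (induct p arbitrary: u) (auto simp: pre_digraph.cas.simps)

lemma conf_facts:
  assumes "confluence H i j p q"
  shows "set p \<subseteq> arcs H" "set q \<subseteq> arcs H" "pre_digraph.cas H i p j" "pre_digraph.cas H i q j"
    "distinct (i # map (head H) p)" "distinct (i # map (head H) q)"
    "set (i # map (head H) p) \<inter> set (i # map (head H) q) \<subseteq> {i, j}" "p \<noteq> q"
proof -
  have c: "pre_digraph.cas H i p j" "pre_digraph.cas H i q j" "set p \<subseteq> arcs H" "set q \<subseteq> arcs H"
    using assms unfolding confluence_def pre_digraph.apath_def pre_digraph.awalk_def by auto
  have e: "pre_digraph.awalk_verts H i p = i # map (head H) p" "pre_digraph.awalk_verts H i q = i # map (head H) q"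
    using c cas_verts by metis+
  show "set p \<subseteq> arcs H" "set q \<subseteq> arcs H" "pre_digraph.cas H i p j" "pre_digraph.cas H i q j"
    using c by auto
  show "distinct (i # map (head H) p)" "distinct (i # map (head H) q)"
    "set (i # map (head H) p) \<inter> set (i # map (head H) q) \<subseteq> {i, j}" "p \<noteq> q"
    using assms unfolding confluence_def pre_digraph.apath_def e[symmetric] by auto
qed

lemma conf_nonempty:
  assumes "confluence H i j p q"
  shows "p \<noteq> []" "q \<noteq> []" "i \<noteq> j"
proof -
  note f = conf_facts[OF assms]
  have A: "x = []" if "pre_digraph.cas H i x i" "distinct (i # map (head H) x)" for x
  proof (rule ccontr)
    assume "x \<noteq> []"
    then have "last (i # map (head H) x) \<in> set (map (head H) x)" by (simp add: last_map)
    with cas_last[OF that(1)] that(2) show False by simp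
  qed
  show "i \<noteq> j"
  proof
    assume "i = j"
    then show False using A f by metis
  qed
  then show "p \<noteq> []" "q \<noteq> []" using f(3,4) by (auto simp: pre_digraph.cas.simps)
qed

lemma distinct_last_butlast: "distinct xs \<Longrightarrow> xs \<noteq> [] \<Longrightarrow> last xs \<notin> set (butlast xs)"
  by (metis append_butlast_last_id distinct_append disjoint_iff list.set_intros(1) distinct1_rotate rotate1.simps(2))

lemma single_arc:
  assumes c: "pre_digraph.cas H i p j" and d: "distinct (i # map (head H) p)"
    and e: "e \<in> set p" "tail H e = i" "head H e = j"
  shows "p = [e]"
proof -
  obtain k where k: "k < length p" "p ! k = e" using e(1) by (auto simp: in_set_conv_nth)
  let ?V = "i # map (head H) p"
  have "?V ! k = ?V ! 0" using cas_nth[OF c k(1)] k e by simp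
  then have k0: "k = 0" using d k(1) nth_eq_iff_index_eq[OF d, of k 0] by simp
  have "?V ! 1 = j" using k k0 e by (simp add: nth_Cons)
  moreover have "?V ! length p = j" using cas_last[OF c] by (simp add: last_conv_nth del: last.simps)
  ultimately have "?V ! 1 = ?V ! length p" by simp
  then have "length p = 1" using nth_eq_iff_index_eq[OF d, of 1 "length p"] k k0 by simp
  then show ?thesis using k k0 by (cases p) auto
qed

lemma conf_cycle:
  assumes cf: "confluence H i j p q"
  defines "vs \<equiv> map (tail H) p @ map (head H) (rev q)" and "es \<equiv> p @ rev q"
  shows "length vs = length es" "distinct vs" "distinct es"
    "\<forall>k<length es. {tail H (es!k), head H (es!k)} = {vs!k, vs!((k+1) mod length es)}"
    "set es = set p \<union> set q" "set vs \<subseteq> tail H ` set p \<union> head H ` set q" "length es \<ge> 2"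
proof -
  note f = conf_facts[OF cf] and ne = conf_nonempty[OF cf]
  let ?Vp = "i # map (head H) p" and ?Vq = "i # map (head H) q"
  have tp: "map (tail H) p = butlast ?Vp" using cas_tails[OF f(3)] .
  have tq: "map (tail H) q = butlast ?Vq" using cas_tails[OF f(4)] .
  have lp: "last ?Vp = j" "last ?Vq = j" using cas_last[OF f(3)] cas_last[OF f(4)] by auto
  have jp: "j \<notin> set (map (tail H) p)" using distinct_last_butlast[OF f(5)] lp tp by simp
  have jq: "j \<notin> set (map (tail H) q)" using distinct_last_butlast[OF f(6)] lp tq by simp
  have iq: "i \<notin> set (map (head H) q)" "i \<notin> set (map (head H) p)" using f(5,6) by auto
  have sub: "set (butlast xs) \<subseteq> set xs" for xs :: "'a list" by (meson in_set_butlastD subsetI)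
  show "length vs = length es" unfolding vs_def es_def by simp
  show "set es = set p \<union> set q" unfolding es_def by auto
  show "set vs \<subseteq> tail H ` set p \<union> head H ` set q" unfolding vs_def by auto
  show "length es \<ge> 2" unfolding es_def using ne by (cases p; cases q) auto
  show "distinct vs"
  proof -
    have "distinct (map (tail H) p)" by (metis tp f(5) distinct_butlast)
    moreover have "distinct (map (head H) (rev q))" using f(6) by (simp add: rev_map[symmetric])
    moreover have "set (map (tail H) p) \<inter> set (map (head H) q) = {}"
    proof (rule ccontr)
      assume "\<not> ?thesis"
      then obtain x where x: "x \<in> set (map (tail H) p)" "x \<in> set (map (head H) q)" by blast
      have "x \<in> set ?Vp" using x(1) tp sub by (metis subsetD)
      moreover have "x \<in> set ?Vq" using x(2) by simp
      ultimately have "x \<in> {i, j}" using f(7) by blast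
      then show False using x jp iq by auto
    qed
    ultimately show ?thesis unfolding vs_def by (simp add: rev_map[symmetric])
  qed
  show "distinct es"
  proof -
    have "distinct (map (tail H) p)" by (metis tp f(5) distinct_butlast)
    then have dp: "distinct p" by (simp add: distinct_map)
    have dq: "distinct q" using f(6) distinct_map[of "head H" q] by simp
    have "set p \<inter> set q = {}"
    proof (rule ccontr)
      assume "\<not> ?thesis"
      then obtain e where e: "e \<in> set p" "e \<in> set q" by blast
      have t1: "tail H e \<in> set ?Vp" using e(1) tp sub by (metis image_eqI list.set_map subsetD)
      have t2: "tail H e \<in> set ?Vq" using e(2) tq sub by (metis image_eqI list.set_map subsetD)
      have "tail H e \<noteq> j" using e(1) jp by auto
      then have ti: "tail H e = i" using t1 t2 f(7) by blast
      have "head H e \<in> set ?Vp" "head H e \<in> set ?Vq" using e by auto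
      moreover have "head H e \<noteq> i" using e(1) iq by auto
      ultimately have hj: "head H e = j" using f(7) by blast
      have "p = [e]" using single_arc[OF f(3) f(5) e(1) ti hj] .
      moreover have "q = [e]" using single_arc[OF f(4) f(6) e(2) ti hj] .
      ultimately show False using f(8) by simp
    qed
    then show ?thesis unfolding es_def using dp dq by simp
  qed
  show "\<forall>k<length es. {tail H (es!k), head H (es!k)} = {vs!k, vs!((k+1) mod length es)}"
  proof (intro allI impI)
    fix k assume k: "k < length es"
    have n: "length es = length p + length q" unfolding es_def by simp
    have hlq: "head H (last q) = j" using lp(2) ne by (simp add: last_map)
    have hlp: "head H (last p) = j" using lp(1) ne by (simp add: last_map)
    show "{tail H (es!k), head H (es!k)} = {vs!k, vs!((k+1) mod length es)}"
    proof (cases "k < length p")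
      case True
      have a: "es ! k = p ! k" "vs ! k = tail H (p ! k)" unfolding es_def vs_def using True by (auto simp: nth_append)
      have m: "(k+1) mod length es = k + 1" using n True ne by (cases q) auto
      have "head H (p ! k) = vs ! (k+1)"
      proof (cases "k + 1 < length p")
        case True
        then have "vs ! (k+1) = tail H (p ! (k+1))" unfolding vs_def by (auto simp: nth_append)
        also have "\<dots> = head H (p ! k)" using cas_nth[OF f(3) True] \<open>k < length p\<close> by simp
        finally show ?thesis by simp
      next
        case False
        then have kk: "k + 1 = length p" using \<open>k < length p\<close> by simp
        then have "vs ! (k+1) = head H (rev q ! 0)" unfolding vs_def using ne by (simp add: nth_append)
        also have "\<dots> = j" using hlq ne by (simp add: rev_nth last_conv_nth)
        also have "j = head H (p ! k)" using hlp ne kk by (simp add: last_conv_nth del: One_nat_def) (metis add_diff_cancel_right')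
        finally show ?thesis by simp
      qed
      then show ?thesis using a m by simp
    next
      case False
      define t where "t = k - length p"
      have t: "t < length q" "k = length p + t" using False k n unfolding t_def by auto
      have a: "es ! k = q ! (length q - Suc t)" "vs ! k = head H (q ! (length q - Suc t))"
        unfolding es_def vs_def using t by (auto simp: nth_append rev_nth)
      have "tail H (q ! (length q - Suc t)) = vs ! ((k+1) mod length es)"
      proof (cases "t + 1 < length q")
        case True
        have m: "(k+1) mod length es = length p + (t+1)" using t n True by simp
        have "vs ! (length p + (t+1)) = head H (q ! (length q - Suc (Suc t)))"
          unfolding vs_def using True by (simp add: nth_append rev_nth)
        moreover have "tail H (q ! (length q - Suc t)) = ?Vq ! (length q - Suc t)"
          using cas_nth[OF f(4)] t by simp
        moreover have "length q - Suc t = Suc (length q - Suc (Suc t))" using True by simp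
        ultimately show ?thesis using m by simp
      next
        case False
        then have tt: "t = length q - 1" using t by simp
        have m: "(k+1) mod length es = 0" using t n tt ne by (cases q) auto
        have "vs ! 0 = tail H (p ! 0)" unfolding vs_def using ne by (simp add: nth_append)
        also have "\<dots> = i" using cas_nth[OF f(3), of 0] ne by simp
        also have "i = tail H (q ! 0)" using cas_nth[OF f(4), of 0] ne by simp
        finally show ?thesis using m tt ne by simp
      qed
      then show ?thesis using a by (simp add: insert_commute)
    qed
  qed
qed

lemma cas_head_next: "pre_digraph.cas H u p v \<Longrightarrow> e \<in> set p \<Longrightarrow> head H e = v \<or> head H e \<in> tail H ` set p"
proof (induct p arbitrary: u)
  case Nil then show ?case by simp
next
  case (Cons a p)
  then have c: "pre_digraph.cas H (head H a) p v" by (simp add: pre_digraph.cas.simps)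
  show ?case
  proof (cases "e = a")
    case True
    show ?thesis
    proof (cases p)
      case Nil then show ?thesis using c True by (simp add: pre_digraph.cas.simps)
    next
      case (Cons b p') then show ?thesis using c True by (auto simp: pre_digraph.cas.simps)
    qed
  next
    case False
    then show ?thesis using Cons c by auto
  qed
qed

lemma conf_sink:
  assumes cf: "confluence H i j p q"
  shows "j \<notin> tail H ` (set p \<union> set q)" "j \<in> head H ` (set p \<union> set q)"
    "\<And>x. x \<in> head H ` (set p \<union> set q) \<Longrightarrow> x \<notin> tail H ` (set p \<union> set q) \<Longrightarrow> x = j"
proof -
  note f = conf_facts[OF cf] and ne = conf_nonempty[OF cf]
  let ?Vp = "i # map (head H) p" and ?Vq = "i # map (head H) q"
  have tp: "map (tail H) p = butlast ?Vp" using cas_tails[OF f(3)] .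
  have tq: "map (tail H) q = butlast ?Vq" using cas_tails[OF f(4)] .
  have lp: "last ?Vp = j" "last ?Vq = j" using cas_last[OF f(3)] cas_last[OF f(4)] by auto
  have jp: "j \<notin> set (map (tail H) p)" using distinct_last_butlast[OF f(5)] lp tp by simp
  have jq: "j \<notin> set (map (tail H) q)" using distinct_last_butlast[OF f(6)] lp tq by simp
  show "j \<notin> tail H ` (set p \<union> set q)" using jp jq by auto
  have "head H (last p) = j" using lp(1) ne by (simp add: last_map)
  then show "j \<in> head H ` (set p \<union> set q)" using ne by auto
  fix x assume "x \<in> head H ` (set p \<union> set q)" "x \<notin> tail H ` (set p \<union> set q)"
  then show "x = j" using cas_head_next[OF f(3)] cas_head_next[OF f(4)] by blast
qed

lemma ucycle_ends:
  assumes u: "ucycle G vs es" and e: "e \<in> set es"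
  shows "tail G e \<in> set vs" "head G e \<in> set vs" "length es \<ge> 2 \<Longrightarrow> tail G e \<noteq> head G e"
proof -
  obtain k where k: "k < length es" "es ! k = e" using e by (auto simp: in_set_conv_nth)
  have c: "{tail G e, head G e} = {vs!k, vs!((k+1) mod length es)}" using u k unfolding ucycle_def by auto
  have l: "length vs = length es" "distinct vs" using u unfolding ucycle_def by auto
  have m: "(k+1) mod length es < length es" using k by (intro mod_less_divisor) linarith
  have s: "vs!k \<in> set vs" "vs!((k+1) mod length es) \<in> set vs" using k m l by auto
  have "{tail G e, head G e} \<subseteq> set vs" using s unfolding c by blast
  then show "tail G e \<in> set vs" "head G e \<in> set vs" by auto
  assume "length es \<ge> 2"
  then have "(k+1) mod length es \<noteq> k"
  proof (cases "k + 1 < length es")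
    case False
    then have "k + 1 = length es" using k by simp
    then have "(k+1) mod length es = 0" by simp
    then show ?thesis using \<open>length es \<ge> 2\<close> \<open>k + 1 = length es\<close> by simp
  qed simp
  then have "vs!k \<noteq> vs!((k+1) mod length es)" using nth_eq_iff_index_eq[OF l(2)] k m l by simp
  then show "tail G e \<noteq> head G e" using c by (metis doubleton_eq_iff insert_absorb2)
qed

lemma conf_ucycle:
  assumes fg: "fin_digraph G" and eo: "extraction_order G H s" and cf: "confluence H i j p q"
  shows "\<exists>vs es. ucycle G vs es \<and> set es = set p \<union> set q \<and> length es \<ge> 2"
proof -
  define vs where "vs \<equiv> map (tail H) p @ map (head H) (rev q)"
  define es where "es \<equiv> p @ rev q"
  note c = conf_cycle[OF cf, folded vs_def es_def]
  note f = conf_facts[OF cf]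
  have wf: "wf_digraph G" using fg by (simp add: fin_digraph_def)
  have ar: "arcs H = arcs G" "verts H = verts G" using eo unfolding extraction_order_def by auto
  have or: "\<And>e. e \<in> arcs G \<Longrightarrow> {tail H e, head H e} = {tail G e, head G e}"
    using eo unfolding extraction_order_def by fastforce
  have vin: "\<And>e. e \<in> arcs G \<Longrightarrow> tail H e \<in> verts G \<and> head H e \<in> verts G"
  proof -
    fix e assume e: "e \<in> arcs G"
    have "tail G e \<in> verts G" "head G e \<in> verts G"
      using wf e by (auto intro: wf_digraph.tail_in_verts wf_digraph.head_in_verts)
    moreover have "tail H e \<in> {tail G e, head G e}" "head H e \<in> {tail G e, head G e}"
      using or[OF e] by (metis insertI1 insert_commute)+
    ultimately show "tail H e \<in> verts G \<and> head H e \<in> verts G" by auto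
  qed
  have esa: "set es \<subseteq> arcs G" using c(5) f(1,2) ar by auto
  have vsv: "set vs \<subseteq> verts G" using c(6) f(1,2) ar vin by blast
  have "ucycle G vs es" unfolding ucycle_def
  proof (intro conjI allI impI)
    show "es \<noteq> []" using c(7) by auto
    fix k assume k: "k < length es"
    then have "es ! k \<in> arcs G" using esa by auto
    then show "{tail G (es ! k), head G (es ! k)} = {vs ! k, vs ! ((k + 1) mod length es)}"
      using c(4) k or by metis
  qed (use c esa vsv in auto)
  then show ?thesis using c by blast
qed

lemma label_unique:
  assumes fg: "fin_digraph G" and ca: "cactus G" and eo: "extraction_order G H s"
    and cf: "confluence H i j p q" and cf': "confluence H i' j' p' q'"
    and e: "e \<in> set p \<union> set q" "e \<in> set p' \<union> set q'"
  shows "j = j'"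
proof -
  obtain vs es where u: "ucycle G vs es" "set es = set p \<union> set q" "length es \<ge> 2"
    using conf_ucycle[OF fg eo cf] by blast
  obtain vs' es' where u': "ucycle G vs' es'" "set es' = set p' \<union> set q'" "length es' \<ge> 2"
    using conf_ucycle[OF fg eo cf'] by blast
  have "set es = set es'"
  proof (rule ccontr)
    assume ne: "set es \<noteq> set es'"
    have "e \<in> set es" "e \<in> set es'" using u u' e by auto
    then have "{tail G e, head G e} \<subseteq> set vs \<inter> set vs'" "tail G e \<noteq> head G e"
      using ucycle_ends[OF u(1)] ucycle_ends[OF u'(1)] u(3) by auto
    then have "card {tail G e, head G e} \<le> card (set vs \<inter> set vs')"
      by (intro card_mono) auto
    then have "card (set vs \<inter> set vs') \<ge> 2" using \<open>tail G e \<noteq> head G e\<close> by simp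
    moreover have "card (set vs \<inter> set vs') \<le> 1" using ca ne u(1) u'(1) unfolding cactus_def by blast
    ultimately show False by simp
  qed
  then have S: "set p \<union> set q = set p' \<union> set q'" using u u' by simp
  show ?thesis using conf_sink[OF cf] conf_sink[OF cf'] S by metis
qed

theorem theorem33:
  fixes G H :: "('a,'b) pre_digraph" and s :: 'a
  assumes "fin_digraph G"
    and "cactus G"
    and "extraction_order G H s"
  shows "extraction_width H \<le> 2"
proof -
  have L: "x = y" if hx: "x \<in> label_set H e" and hy: "y \<in> label_set H e" for e x y
  proof -
    obtain i p q where 1: "confluence H i x p q" "e \<in> set p \<union> set q"
      using hx unfolding label_set_def by blast
    obtain i' p' q' where 2: "confluence H i' y p' q'" "e \<in> set p' \<union> set q'"
      using hy unfolding label_set_def by blast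
    show ?thesis by (rule label_unique[OF assms 1(1) 2(1) 1(2) 2(2)])
  qed
  have C: "card A \<le> 1" if "A \<subseteq> label_set H e" for A e
  proof (cases "A = {}")
    case False
    then obtain x where x: "x \<in> A" by blast
    have "\<And>y. y \<in> A \<Longrightarrow> y = x" using that x L by (meson subsetD)
    then have "A = {x}" using x by blast
    then show ?thesis by simp
  qed simp
  have B: "card (bag_label H B) \<le> 1" if hB: "B \<in> bags H u" for B u
  proof -
    obtain e0 where B: "B = (bag_rel H u)\<^sup>* `` {e0}"
      using hB unfolding bags_def by (rule quotientE) blast
    have EQ: "label_set H e' = label_set H e0" if "(e0, e') \<in> (bag_rel H u)\<^sup>*" for e'
      using that
    proof (induct rule: rtrancl_induct)
      case (step y z)
      from step(2) have "label_set H y \<inter> label_set H z \<noteq> {}" unfolding bag_rel_def by simp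
      then obtain x where x: "x \<in> label_set H y" "x \<in> label_set H z" by blast
      have "label_set H z = label_set H y"
      proof (intro equalityI subsetI)
        fix w assume "w \<in> label_set H z" then have "w = x" using L[OF _ x(2)] by blast
        then show "w \<in> label_set H y" using x by simp
      next
        fix w assume "w \<in> label_set H y" then have "w = x" using L[OF _ x(1)] by blast
        then show "w \<in> label_set H z" using x by simp
      qed
      then show ?case using step by simp
    qed simp
    have "bag_label H B \<subseteq> label_set H e0" unfolding bag_label_def
    proof (rule Union_least)
      fix X assume "X \<in> label_set H ` B"
      then obtain e' where e': "e' \<in> B" "X = label_set H e'" by blast
      have r: "(e0, e') \<in> (bag_rel H u)\<^sup>*" using e'(1) unfolding B Image_singleton_iff .
      show "X \<subseteq> label_set H e0" unfolding e'(2) EQ[OF r] by (rule subset_refl)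
    qed
    then show ?thesis by (rule C)
  qed
  let ?S = "{card (bag_label H B) | B u. u \<in> verts H \<and> B \<in> bags H u}"
  have "?S \<subseteq> {..1}"
  proof
    fix x assume "x \<in> ?S"
    then obtain B u where "x = card (bag_label H B)" "B \<in> bags H u" by blast
    then show "x \<in> {..1}" using B by simp
  qed
  then have "finite (insert 0 ?S)" by (meson finite_atMost finite_insert finite_subset)
  moreover have "\<forall>x \<in> insert 0 ?S. x \<le> 1" using \<open>?S \<subseteq> {..1}\<close> by auto
  ultimately have "Max (insert 0 ?S) \<le> 1" by (simp add: Max_le_iff)
  then show ?thesis unfolding extraction_width_def by simp
qed

end
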